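(* Let $n\ge 1$ and let $f:\{0,1\}^n\to\{0,1\}^n$. The map $G_f:\mathcal{X}\to\mathcal{X}$ is topologically transitive (with respect to the metric $d$) if and only if the asynchronous iteration graph $\Gamma(f)$ is strongly connected.
   Context: Write $\mathbb{B}=\{0,1\}$ and $\llbracket 1;n\rrbracket=\{1,\dots,n\}$. For $f=(f_1,\dots,f_n):\mathbb{B}^n\to\mathbb{B}^n$, define $F_f:\llbracket 1;n\rrbracket\times\mathbb{B}^n\to\mathbb{B}^n$ by $F_f(i,x)=(x_1,\dots,x_{i-1},f_i(x),x_{i+1},\dots,x_n)$. Let $\mathcal{X}=\llbracket 1;n\rrbracket^{\mathbb{N}}\times\mathbb{B}^n$ and define $G_f:\mathcal{X}\to\mathcal{X}$ by $G_f(s,x)=(\sigma(s),F_f(s_0,x))$, where $\sigma(s)_t=s_{t+1}$ for all $t\in\mathbb{N}$. The metric on $\mathcal{X}$ is $d((s,x),(s',x'))=\sum_{i=1}^n|x_i-x'_i|+\frac{9}{n}\sum_{t\in\mathbb{N}}\frac{|s_t-s'_t|}{10^{t+1}}$. $G_f$ is topologically transitive if for all $X,Y\in\mathcal{X}$ and all open balls $B_X,B_Y$ centered at $X$ and $Y$, there exist $X'\in B_X$ and $t\in\mathbb{N}$ with $G_f^t(X')\in B_Y$. The asynchronous iteration graph $\Gamma(f)$ is the directed graph with vertex set $\mathbb{B}^n$ containing, for every $x\in\mathbb{B}^n$ and every $i\in\llbracket 1;n\rrbracket$, an arc from $x$ to $F_f(i,x)$. *)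

theory Defs
  imports Complex_Main
begin

text \<open>Components are indexed by 1..n. A point of B^n is a function nat => bool
  that is False outside {1..n} (so that B^n is represented faithfully as a set).\<close>

definition Bn :: "nat \<Rightarrow> (nat \<Rightarrow> bool) set" where
  "Bn n = {x. \<forall>i. i \<notin> {1..n} \<longrightarrow> \<not> x i}"

definition Strat :: "nat \<Rightarrow> (nat \<Rightarrow> nat) set" where
  "Strat n = {s. \<forall>t. s t \<in> {1..n}}"

definition XX :: "nat \<Rightarrow> ((nat \<Rightarrow> nat) \<times> (nat \<Rightarrow> bool)) set" where
  "XX n = Strat n \<times> Bn n"

definition Ff :: "((nat \<Rightarrow> bool) \<Rightarrow> (nat \<Rightarrow> bool)) \<Rightarrow> nat \<Rightarrow> (nat \<Rightarrow> bool) \<Rightarrow> (nat \<Rightarrow> bool)" where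
  "Ff f i x = x(i := f x i)"

definition Gf :: "((nat \<Rightarrow> bool) \<Rightarrow> (nat \<Rightarrow> bool)) \<Rightarrow> (nat \<Rightarrow> nat) \<times> (nat \<Rightarrow> bool) \<Rightarrow> (nat \<Rightarrow> nat) \<times> (nat \<Rightarrow> bool)" where
  "Gf f = (\<lambda>(s, x). (\<lambda>t. s (Suc t), Ff f (s 0) x))"

definition dist_X :: "nat \<Rightarrow> (nat \<Rightarrow> nat) \<times> (nat \<Rightarrow> bool) \<Rightarrow> (nat \<Rightarrow> nat) \<times> (nat \<Rightarrow> bool) \<Rightarrow> real" where
  "dist_X n = (\<lambda>(s, x) (s', x').
      (\<Sum>i = 1..n. if x i = x' i then 0 else 1)
      + 9 / real n * (\<Sum>t. \<bar>real (s t) - real (s' t)\<bar> / 10 ^ (t + 1)))"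

definition ball_X :: "nat \<Rightarrow> (nat \<Rightarrow> nat) \<times> (nat \<Rightarrow> bool) \<Rightarrow> real \<Rightarrow> ((nat \<Rightarrow> nat) \<times> (nat \<Rightarrow> bool)) set" where
  "ball_X n c r = {y \<in> XX n. dist_X n c y < r}"

definition topologically_transitive ::
  "nat \<Rightarrow> ((nat \<Rightarrow> bool) \<Rightarrow> (nat \<Rightarrow> bool)) \<Rightarrow> bool" where
  "topologically_transitive n f \<longleftrightarrow>
     (\<forall>X \<in> XX n. \<forall>Y \<in> XX n. \<forall>rX > 0. \<forall>rY > 0.
        \<exists>X' \<in> ball_X n X rX. \<exists>t::nat. (Gf f ^^ t) X' \<in> ball_X n Y rY)"

definition Gamma_arcs :: "nat \<Rightarrow> ((nat \<Rightarrow> bool) \<Rightarrow> (nat \<Rightarrow> bool)) \<Rightarrow> ((nat \<Rightarrow> bool) \<times> (nat \<Rightarrow> bool)) set" where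
  "Gamma_arcs n f = {(x, Ff f i x) | x i. x \<in> Bn n \<and> i \<in> {1..n}}"

definition strongly_connected_Gamma :: "nat \<Rightarrow> ((nat \<Rightarrow> bool) \<Rightarrow> (nat \<Rightarrow> bool)) \<Rightarrow> bool" where
  "strongly_connected_Gamma n f \<longleftrightarrow> (\<forall>x \<in> Bn n. \<forall>y \<in> Bn n. (x, y) \<in> (Gamma_arcs n f)\<^sup>*)"

end

theory Submission
  imports Defs
begin

fun run :: "((nat \<Rightarrow> bool) \<Rightarrow> (nat \<Rightarrow> bool)) \<Rightarrow> (nat \<Rightarrow> nat) \<Rightarrow> nat \<Rightarrow> (nat \<Rightarrow> bool) \<Rightarrow> (nat \<Rightarrow> bool)" where
  "run f s 0 x = x"
| "run f s (Suc t) x = run f (\<lambda>u. s (Suc u)) t (Ff f (s 0) x)"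

lemma Gf_pow: "(Gf f ^^ t) (s, x) = (\<lambda>u. s (u + t), run f s t x)"
proof (induction t arbitrary: s x)
  case 0 then show ?case by simp
next
  case (Suc t)
  have "(Gf f ^^ Suc t) (s, x) = (Gf f ^^ t) (Gf f (s, x))" by (simp only: funpow_Suc_right comp_apply)
  also have "\<dots> = (\<lambda>u. s (u + Suc t), run f s (Suc t) x)"
  proof -
    have "Gf f (s, x) = (\<lambda>u. s (Suc u), Ff f (s 0) x)" by (simp add: Gf_def)
    then show ?thesis using Suc.IH[of "\<lambda>u. s (Suc u)" "Ff f (s 0) x"] by simp
  qed
  finally show ?case .
qed

lemma run_add: "run f q (k + m) x = run f (\<lambda>u. q (u + k)) m (run f q k x)"
  by (induction k arbitrary: q x) auto

lemma run_prefix: "(\<forall>u<k. q u = s u) \<Longrightarrow> run f q k x = run f s k x"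
proof (induction k arbitrary: q s x)
  case 0 then show ?case by simp
next
  case (Suc k)
  then show ?case by (simp add: Suc.IH)
qed

lemma Ff_Bn: "x \<in> Bn n \<Longrightarrow> i \<in> {1..n} \<Longrightarrow> Ff f i x \<in> Bn n"
  by (auto simp: Bn_def Ff_def)

lemma run_Bn: "s \<in> Strat n \<Longrightarrow> x \<in> Bn n \<Longrightarrow> run f s t x \<in> Bn n"
proof (induction t arbitrary: s x)
  case 0 then show ?case by simp
next
  case (Suc t)
  have "(\<lambda>u. s (Suc u)) \<in> Strat n" using Suc.prems by (auto simp: Strat_def)
  moreover have "Ff f (s 0) x \<in> Bn n" using Suc.prems by (intro Ff_Bn) (auto simp: Strat_def)
  ultimately show ?case using Suc.IH by simp
qed

lemma run_path: "s \<in> Strat n \<Longrightarrow> x \<in> Bn n \<Longrightarrow> (x, run f s t x) \<in> (Gamma_arcs n f)\<^sup>*"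
proof (induction t arbitrary: s x)
  case 0 then show ?case by simp
next
  case (Suc t)
  have "(\<lambda>u. s (Suc u)) \<in> Strat n" using Suc.prems by (auto simp: Strat_def)
  moreover have B: "Ff f (s 0) x \<in> Bn n" using Suc.prems by (intro Ff_Bn) (auto simp: Strat_def)
  ultimately have "(Ff f (s 0) x, run f s (Suc t) x) \<in> (Gamma_arcs n f)\<^sup>*" using Suc.IH by simp
  moreover have "(x, Ff f (s 0) x) \<in> Gamma_arcs n f"
    using Suc.prems by (auto simp: Gamma_arcs_def Strat_def)
  ultimately show ?case by (meson converse_rtrancl_into_rtrancl)
qed

lemma path_run:
  assumes "(z, y) \<in> (Gamma_arcs n f)\<^sup>*"
  shows "\<forall>s\<in>Strat n. \<exists>p m. p \<in> Strat n \<and> run f p m z = y \<and> (\<forall>u. p (u + m) = s u)"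
  using assms
proof (induction rule: converse_rtrancl_induct)
  case base
  then show ?case by (metis add_0_right run.simps(1))
next
  case (step z w)
  show ?case
  proof
    fix s assume s: "s \<in> Strat n"
    from step.hyps(1) obtain i where i: "i \<in> {1..n}" "w = Ff f i z"
      by (auto simp: Gamma_arcs_def)
    from step.IH s obtain p m where pm: "p \<in> Strat n" "run f p m w = y" "\<forall>u. p (u + m) = s u"
      by blast
    define p' where "p' = (\<lambda>u. case u of 0 \<Rightarrow> i | Suc v \<Rightarrow> p v)"
    have "p' \<in> Strat n" using pm(1) i by (auto simp: Strat_def p'_def split: nat.splits)
    moreover have "run f p' (Suc m) z = y" using pm(2) i by (simp add: p'_def)
    moreover have "\<forall>u. p' (u + Suc m) = s u" using pm(3) by (simp add: p'_def)
    ultimately show "\<exists>p m. p \<in> Strat n \<and> run f p m z = y \<and> (\<forall>u. p (u + m) = s u)" by blast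
  qed
qed

lemma strat_term_bound:
  assumes "s \<in> Strat n" "s' \<in> Strat n"
  shows "\<bar>real (s t) - real (s' t)\<bar> / 10 ^ (t + 1) \<le> real n * (1/10) ^ (t+1)"
proof -
  have "s t \<in> {1..n}" "s' t \<in> {1..n}" using assms by (auto simp: Strat_def)
  then have "\<bar>real (s t) - real (s' t)\<bar> \<le> real n" by (auto simp: abs_if)
  then show ?thesis by (simp add: divide_simps power_one_over)
qed

lemma strat_summable:
  assumes "s \<in> Strat n" "s' \<in> Strat n"
  shows "summable (\<lambda>t. \<bar>real (s t) - real (s' t)\<bar> / 10 ^ (t + 1))"
proof (rule summable_comparison_test[where g = "\<lambda>t. real n * (1/10) ^ (t+1)"])
  show "\<exists>N. \<forall>t\<ge>N. norm (\<bar>real (s t) - real (s' t)\<bar> / 10 ^ (t + 1)) \<le> real n * (1/10) ^ (t+1)"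
    using strat_term_bound[OF assms] by auto
  show "summable (\<lambda>t. real n * (1/10) ^ (t+1))"
    by (intro summable_mult summable_ignore_initial_segment[where k=1, simplified]) (simp add: summable_geometric)
qed

lemma hamming_small:
  fixes n :: nat and x x' :: "nat \<Rightarrow> bool"
  assumes "(\<Sum>i = 1..n. if x i = x' i then 0 else 1 :: real) < 1"
  shows "\<forall>i\<in>{1..n}. x i = x' i"
proof (rule ccontr)
  assume "\<not> ?thesis"
  then obtain i where i: "i \<in> {1..n}" "x i \<noteq> x' i" by blast
  have "(if x i = x' i then 0 else 1 :: real) \<le> (\<Sum>i = 1..n. if x i = x' i then 0 else 1 :: real)"
    by (rule member_le_sum) (use i in simp_all)
  with i assms show False by simp
qed

lemma dist_small_eq:
  assumes "s \<in> Strat n" "s' \<in> Strat n" "x \<in> Bn n" "x' \<in> Bn n"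
    "dist_X n (s, x) (s', x') < 1"
  shows "x = x'"
proof -
  have "0 \<le> (\<Sum>t. \<bar>real (s t) - real (s' t)\<bar> / 10 ^ (t + 1))"
    by (intro suminf_nonneg strat_summable[OF assms(1,2)]) auto
  then have "0 \<le> 9 / real n * (\<Sum>t. \<bar>real (s t) - real (s' t)\<bar> / 10 ^ (t + 1))" by simp
  with assms(5) have "(\<Sum>i = 1..n. if x i = x' i then 0 else 1 :: real) < 1"
    by (simp add: dist_X_def)
  from hamming_small[OF this] assms(3,4) show ?thesis
    by (auto simp: Bn_def fun_eq_iff)
qed

lemma tail_bound:
  assumes "s \<in> Strat n" "q \<in> Strat n" "\<forall>u<k. q u = s u"
  shows "9 / real n * (\<Sum>t. \<bar>real (s t) - real (q t)\<bar> / 10 ^ (t + 1)) \<le> (1/10)^k"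
proof -
  define F where "F = (\<lambda>t. \<bar>real (s t) - real (q t)\<bar> / 10 ^ (t + 1))"
  have sF: "summable F" unfolding F_def by (rule strat_summable[OF assms(1,2)])
  have "suminf F = (\<Sum>u. F (u + k)) + sum F {..<k}"
    by (rule suminf_split_initial_segment[OF sF])
  moreover have "sum F {..<k} = 0" using assms(3) by (simp add: F_def)
  ultimately have e: "suminf F = (\<Sum>u. F (u + k))" by simp
  define g where "g = (\<lambda>u. real n * (1/10)^k * (1/10) * (1/10::real)^u)"
  have gs: "g sums (real n * (1/10)^k * (1/10) * (1 / (1 - 1/10)))"
    unfolding g_def by (intro sums_mult geometric_sums) simp
  have le: "F (u + k) \<le> g u" for u
  proof -
    have "F (u + k) \<le> real n * (1/10) ^ (u + k + 1)"
      unfolding F_def by (rule strat_term_bound[OF assms(1,2)])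
    also have "\<dots> = g u" by (simp add: g_def power_add)
    finally show ?thesis .
  qed
  have "(\<Sum>u. F (u + k)) \<le> suminf g"
    by (rule suminf_le[OF le summable_ignore_initial_segment[OF sF] sums_summable[OF gs]])
  also have "suminf g = real n * (1/10)^k / 9" using sums_unique[OF gs] by simp
  finally have "suminf F \<le> real n * (1/10)^k / 9" using e by simp
  then have "9 / real n * suminf F \<le> 9 / real n * (real n * (1/10)^k / 9)"
    by (intro mult_left_mono) auto
  also have "\<dots> \<le> (1/10)^k" by (cases "n = 0") auto
  finally show ?thesis by (simp add: F_def)
qed

theorem proposition1:
  fixes n :: nat and f :: "(nat \<Rightarrow> bool) \<Rightarrow> (nat \<Rightarrow> bool)"
  assumes "n \<ge> 1"
  assumes "\<forall>x \<in> Bn n. f x \<in> Bn n"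
  shows "topologically_transitive n f \<longleftrightarrow> strongly_connected_Gamma n f"
proof
  assume T: "topologically_transitive n f"
  show "strongly_connected_Gamma n f"
    unfolding strongly_connected_Gamma_def
  proof (intro ballI)
    fix x y assume x: "x \<in> Bn n" and y: "y \<in> Bn n"
    define s0 where "s0 = (\<lambda>_::nat. 1::nat)"
    have s0: "s0 \<in> Strat n" using assms(1) by (simp add: Strat_def s0_def)
    have "(s0, x) \<in> XX n" "(s0, y) \<in> XX n" using s0 x y by (auto simp: XX_def)
    with T obtain X' t where X': "X' \<in> ball_X n (s0, x) (1/2)"
      and t: "(Gf f ^^ t) X' \<in> ball_X n (s0, y) (1/2)"
      unfolding topologically_transitive_def by (meson half_gt_zero zero_less_one)
    obtain s' x' where X'e: "X' = (s', x')" by (cases X')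
    from X' X'e have s': "s' \<in> Strat n" and x': "x' \<in> Bn n"
      and d1: "dist_X n (s0, x) (s', x') < 1/2" by (auto simp: ball_X_def XX_def)
    have "x = x'" using dist_small_eq[OF s0 s' x x'] d1 by simp
    from t X'e Gf_pow[where f=f and t=t and s=s' and x=x'] have
      "dist_X n (s0, y) (\<lambda>u. s' (u + t), run f s' t x') < 1/2"
      and r: "(\<lambda>u. s' (u + t)) \<in> Strat n" "run f s' t x' \<in> Bn n"
      by (auto simp: ball_X_def XX_def)
    then have "y = run f s' t x'" using dist_small_eq[OF s0 r(1) y r(2)] by simp
    then show "(x, y) \<in> (Gamma_arcs n f)\<^sup>*" using run_path[OF s' x', of f t] \<open>x = x'\<close> by simp
  qed
next
  assume SC: "strongly_connected_Gamma n f"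
  show "topologically_transitive n f"
    unfolding topologically_transitive_def
  proof (intro ballI allI impI)
    fix X Y :: "(nat \<Rightarrow> nat) \<times> (nat \<Rightarrow> bool)" and rX rY :: real
    assume X: "X \<in> XX n" and Y: "Y \<in> XX n" and rX: "rX > 0" and rY: "rY > 0"
    obtain s x where Xe: "X = (s, x)" by (cases X)
    obtain sy y where Ye: "Y = (sy, y)" by (cases Y)
    have s: "s \<in> Strat n" and x: "x \<in> Bn n" using X Xe by (auto simp: XX_def)
    have sy: "sy \<in> Strat n" and y: "y \<in> Bn n" using Y Ye by (auto simp: XX_def)
    obtain k where k: "(1/10::real)^k < rX"
      using real_arch_pow_inv[OF rX, of "1/10"] by auto
    define z where "z = run f s k x"
    have z: "z \<in> Bn n" unfolding z_def by (rule run_Bn[OF s x])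
    have "(z, y) \<in> (Gamma_arcs n f)\<^sup>*" using SC z y by (simp add: strongly_connected_Gamma_def)
    from path_run[OF this] sy obtain p m where
      p: "p \<in> Strat n" "run f p m z = y" "\<forall>u. p (u + m) = sy u" by blast
    define q where "q = (\<lambda>u. if u < k then s u else p (u - k))"
    have q: "q \<in> Strat n" using s p(1) by (auto simp: Strat_def q_def)
    have qs: "\<forall>u<k. q u = s u" by (simp add: q_def)
    have qk: "(\<lambda>u. q (u + k)) = p" by (simp add: q_def fun_eq_iff)
    have run_eq: "run f q (k + m) x = y"
      using run_add[of f q k m x] run_prefix[OF qs, of f x] qk p(2) z_def by simp
    have sh: "(\<lambda>u. q (u + (k + m))) = sy"
    proof
      fix u show "q (u + (k + m)) = sy u"
        using p(3) by (simp add: q_def add.assoc[symmetric])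
    qed
    have "dist_X n (s, x) (q, x) \<le> (1/10)^k"
      using tail_bound[OF s q qs] by (simp add: dist_X_def)
    then have "(q, x) \<in> ball_X n X rX" using k q x Xe by (auto simp: ball_X_def XX_def)
    moreover have "(Gf f ^^ (k + m)) (q, x) = Y"
      using Gf_pow[where f=f and t="k + m" and s=q and x=x] sh run_eq Ye by simp
    moreover have "Y \<in> ball_X n Y rY"
      using Y Ye rY by (simp add: ball_X_def dist_X_def)
    ultimately show "\<exists>X' \<in> ball_X n X rX. \<exists>t. (Gf f ^^ t) X' \<in> ball_X n Y rY" by metis
  qed
qed

end
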